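(* Let $d\in\mathbb{N}$, $\mathbf{s}=(s_1,\dots,s_d)\in\mathbb{N}^d$ and $y\in(-\pi/2,\pi/2)$. Let $l_1(n)\in\{2n,2n+1,2n-1\}$ and $l_2(n),\dots,l_d(n)\in\{2n,2n+1\}$. Then for every integer $n\ge0$, \[ \sum_{n_1>\cdots>n_d>n}\frac{a_{n_1}(\sin y)}{l_1(n_1)^{s_1}\cdots l_d(n_d)^{s_d}}=\int_0^y\lambda_{l_1,s_1}\circ\cdots\circ\lambda_{l_d,s_d}\circ\overleftarrow{a_n(\sin t)} , \] and for every $x\in(-1,1)$, \[ \sum_{n_1>\cdots>n_d>n}\frac{a_{n_1}(x)}{l_1(n_1)^{s_1}\cdots l_d(n_d)^{s_d}}=\int_0^x\Lambda_{l_1,s_1}\circ\cdots\circ\Lambda_{l_d,s_d}\circ\overleftarrow{a_n(t)} , \] where $\Lambda_{l,s}$ is obtained from $\lambda_{l,s}$ by the substitution $t\to\sin^{-1}t$.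
   Context: $\mathbb{N}=\{1,2,\dots\}$. Set $a_0(x)=1$, $a_n(x)=\frac{1}{4^n}\binom{2n}{n}x^{2n}$ for $n\ge1$. Iterated integrals: $\int_0^y f_1(t)dt\circ\cdots\circ f_r(t)dt:=\int_{y>t_1>\cdots>t_r>0}f_1(t_1)\cdots f_r(t_r)dt_1\cdots dt_r$; juxtaposition of 1-forms means $\circ$; $(\omega)^k$ is $\omega$ repeated $k$ times ($k=0$: empty); expressions are expanded by linearity (e.g. $\omega\circ(\alpha-\beta\circ\gamma)=\omega\circ\alpha-\omega\circ\beta\circ\gamma$). $d(\sec t)=\sec t\tan t\,dt$. For a function $F$: $f_1(t)dt\circ\overleftarrow{F(t)}\circ f_2(t)dt:=F(t)f_1(t)dt\circ f_2(t)dt$ (and likewise when $\overleftarrow{F}$ stands at the end: it multiplies the preceding 1-form), while $\int_0^y\overleftarrow{F(t)}\circ f_1(t)dt\circ\cdots\circ f_r(t)dt:=F(y)\int_0^y f_1(t)dt\circ\cdots\circ f_r(t)dt$. With $F_s=(\cot t\,dt)^{s-1}$ define $\lambda_{2n,s}(t)=F_s\,(\tan t\,dt-\csc t\,dt\ d(\sec t))$, $\lambda_{2n+1,s}(t)=\overleftarrow{\csc t}\circ F_s\,(\sin t\tan t\,dt-dt\ d(\sec t))$, $\lambda_{2n-1,1}(t)=\overleftarrow{\cos t}\circ\tan t\sec t\,dt$, $\lambda_{2n-1,s}(t)=\overleftarrow{\sin t}\circ F_{s-1}\,\frac{dt}{\tan^2 t}\,\tan t\sec t\,dt$ for $s\ge2$.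 The substitution $t\to\sin^{-1}t$ replaces each function $F(t)$ by $F(\sin^{-1}t)$ and each 1-form $f(t)dt$ by $f(\sin^{-1}t)\,dt/\sqrt{1-t^2}$. *)

theory Defs
  imports "HOL-Analysis.Analysis"
begin

definition a_coef :: "nat \<Rightarrow> real \<Rightarrow> real" where
  "a_coef n x = (if n = 0 then 1 else (real ((2*n) choose n) / 4^n) * x^(2*n))"

definition oint :: "real \<Rightarrow> real \<Rightarrow> (real \<Rightarrow> real) \<Rightarrow> real" where
  "oint a b f = (if a \<le> b then integral {a..b} f else - integral {b..a} f)"

text \<open>Semantics of words of 1-forms and left-arrow functions, as operators acting on the
  value g of the remaining (inner) part of the iterated integral:
  a 1-form f(t)dt followed by a word w with value g gives  y \<mapsto> \<integral>_0^y f(t) g(t) dt;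
  a function marker F followed by w gives y \<mapsto> F(y) g(y).
  Hence \<integral>_0^y w = word value applied to the constant 1 at y, and juxtaposition is
  composition of operators.\<close>
definition form_op :: "(real \<Rightarrow> real) \<Rightarrow> (real \<Rightarrow> real) \<Rightarrow> real \<Rightarrow> real" where
  "form_op f g = (\<lambda>y. oint 0 y (\<lambda>t. f t * g t))"

definition fun_op :: "(real \<Rightarrow> real) \<Rightarrow> (real \<Rightarrow> real) \<Rightarrow> real \<Rightarrow> real" where
  "fun_op F g = (\<lambda>y. F y * g y)"

definition sec_f :: "real \<Rightarrow> real" where "sec_f t = 1 / cos t"
definition csc_f :: "real \<Rightarrow> real" where "csc_f t = 1 / sin t"

datatype lkind = L_even | L_odd | L_oddm

definition l_val :: "lkind \<Rightarrow> nat \<Rightarrow> real" where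
  "l_val k m = (case k of L_even \<Rightarrow> 2 * real m | L_odd \<Rightarrow> 2 * real m + 1
                        | L_oddm \<Rightarrow> 2 * real m - 1)"

text \<open>lambda_{l,s}, generic in a transformation P of 1-form coefficients and Q of function
  markers (identity for lambda, the substitution t -> arcsin t for Lambda).\<close>
definition lam_gen :: "((real \<Rightarrow> real) \<Rightarrow> real \<Rightarrow> real) \<Rightarrow> ((real \<Rightarrow> real) \<Rightarrow> real \<Rightarrow> real)
    \<Rightarrow> lkind \<Rightarrow> nat \<Rightarrow> (real \<Rightarrow> real) \<Rightarrow> real \<Rightarrow> real" where
  "lam_gen P Q k s g =
    (let Fo = (\<lambda>f. form_op (P f)); Fu = (\<lambda>F. fun_op (Q F));
         dsec = (\<lambda>t. sec_f t * tan t)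
     in case k of
       L_even \<Rightarrow> (Fo cot ^^ (s - 1))
                  (\<lambda>y. Fo tan g y - Fo csc_f (Fo dsec g) y)
     | L_odd \<Rightarrow> Fu csc_f ((Fo cot ^^ (s - 1))
                  (\<lambda>y. Fo (\<lambda>t. sin t * tan t) g y - Fo (\<lambda>t. 1) (Fo dsec g) y))
     | L_oddm \<Rightarrow> (if s = 1 then Fu cos (Fo (\<lambda>t. tan t * sec_f t) g)
                  else Fu sin ((Fo cot ^^ (s - 2))
                         (Fo (\<lambda>t. 1 / (tan t)^2) (Fo (\<lambda>t. tan t * sec_f t) g)))))"

definition lam :: "lkind \<Rightarrow> nat \<Rightarrow> (real \<Rightarrow> real) \<Rightarrow> real \<Rightarrow> real" where
  "lam = lam_gen id id"

text \<open>Substitution t -> arcsin t: f(t)dt becomes f(arcsin t) dt / sqrt(1-t^2), F(t) becomes F(arcsin t).\<close>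
definition Lam :: "lkind \<Rightarrow> nat \<Rightarrow> (real \<Rightarrow> real) \<Rightarrow> real \<Rightarrow> real" where
  "Lam = lam_gen (\<lambda>f t. f (arcsin t) / sqrt (1 - t^2)) (\<lambda>F t. F (arcsin t))"

text \<open>Composition L_{l_1,s_1} o ... o L_{l_d,s_d} o (left-arrow h), as operator applied to h.\<close>
definition word_val :: "(lkind \<Rightarrow> nat \<Rightarrow> (real \<Rightarrow> real) \<Rightarrow> real \<Rightarrow> real)
    \<Rightarrow> lkind list \<Rightarrow> nat list \<Rightarrow> (real \<Rightarrow> real) \<Rightarrow> real \<Rightarrow> real" where
  "word_val L ks ss h = foldr (\<lambda>(k, s) g. L k s g) (zip ks ss) h"

definition dec_tuples :: "nat \<Rightarrow> nat \<Rightarrow> nat list set" where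
  "dec_tuples d n = {ns. length ns = d \<and> sorted_wrt (>) ns \<and> (\<forall>m\<in>set ns. n < m)}"

definition summand :: "lkind list \<Rightarrow> nat list \<Rightarrow> real \<Rightarrow> nat list \<Rightarrow> real" where
  "summand ks ss x ns = a_coef (hd ns) x / (\<Prod>i<length ks. l_val (ks ! i) (ns ! i) ^ (ss ! i))"

end

theory Submission
  imports Defs
begin


definition bc :: "nat \<Rightarrow> real" where "bc k = real ((2*k) choose k) / 4^k"

lemma a_coef_eq: "a_coef k x = bc k * (x^2)^k"
  by (simp add: a_coef_def bc_def power_mult)

lemma bc_Suc: "bc (Suc k) * (2*real k+2) = bc k * (2*real k+1)"
proof -
  have f1: "real ((2*k) choose k) = fact (2*k) / (fact k * fact k)"
    using binomial_fact[of k "2*k", where 'a=real] by simp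
  have f2: "real ((2*Suc k) choose Suc k) = fact (2*k+2) / (fact (Suc k) * fact (Suc k))"
    using binomial_fact[of "Suc k" "2*Suc k", where 'a=real] by simp
  have f3: "(fact (2*k+2)::real) = (2*real k+2)*(2*real k+1)*fact (2*k)"
    by (simp add: fact_Suc algebra_simps)
  have f4: "(fact (Suc k)::real) = (real k+1)*fact k" by (simp add: fact_Suc algebra_simps)
  have g0: "\<And>F A P y::real. A > 0 \<Longrightarrow> P > 0 \<Longrightarrow> y > 0 \<Longrightarrow>
     (2*y)*(2*y-1)*F / (y*A*(y*A)) / (4*P) * (2*y) = F/(A*A)/P * (2*y-1)"
    by (simp add: field_simps)
  have g: "\<And>F A P x::real. A > 0 \<Longrightarrow> P > 0 \<Longrightarrow> x \<ge> 0 \<Longrightarrow>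
     (2*x+2)*(2*x+1)*F / ((x+1)*A*((x+1)*A)) / (4*P) * (2*x+2) = F/(A*A)/P * (2*x+1)"
    using g0[of _ _ "x+1" for x] by (smt (verit))
  show ?thesis unfolding bc_def f1 f2 f3 f4 power_Suc
    by (rule g) auto
qed

lemma bc_pos: "bc k > 0" by (simp add: bc_def)

lemma bc_le1: "bc k \<le> 1"
proof (induction k)
  case 0 then show ?case by (simp add: bc_def)
next
  case (Suc k)
  have "bc (Suc k) = bc k * (2*real k+1) / (2*real k+2)" using bc_Suc[of k] by (simp add: field_simps)
  also have "\<dots> \<le> bc k" using bc_pos[of k] by (simp add: field_simps)
  finally show ?case using Suc by simp
qed



definition R :: "(nat \<Rightarrow> real) \<Rightarrow> bool" where
  "R u \<longleftrightarrow> (\<forall>r. 0 \<le> r \<longrightarrow> r < 1 \<longrightarrow> (\<exists>M. \<forall>k. \<bar>u k\<bar> * r^k \<le> M))"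

lemma RD: "R u \<Longrightarrow> 0 \<le> r \<Longrightarrow> r < 1 \<Longrightarrow> \<exists>M. \<forall>k. \<bar>u k\<bar> * r^k \<le> M"
  unfolding R_def by blast

lemma kq_bounded: assumes "0 \<le> q" "q < 1" shows "\<exists>B. \<forall>k. real k * q^k \<le> B"
proof -
  have "(\<lambda>n. of_nat n * q ^ n) \<longlonglongrightarrow> 0" using assms by (intro powser_times_n_limit_0) auto
  hence "Bseq (\<lambda>n. real n * q ^ n)" by (intro convergent_imp_Bseq) (auto simp: convergent_def)
  then obtain K where K: "\<forall>n. norm (real n * q^n) \<le> K" unfolding Bseq_def by blast
  have "\<forall>k. real k * q^k \<le> K" using K by (simp add: abs_le_iff)
  thus ?thesis by blast
qed

lemma R_split:
  assumes "0 \<le> (r::real)" "r < 1"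
  obtains r' where "r < r'" "r' < 1" "0 < r'" "0 \<le> r/r'" "r/r' < 1"
proof -
  define r' where "r' = (1+r)/2"
  have "r < r'" "r' < 1" "0 < r'" using assms by (auto simp: r'_def)
  moreover have "0 \<le> r/r'" "r/r' < 1" using assms \<open>r<r'\<close> \<open>0<r'\<close> by (auto simp: divide_simps)
  ultimately show ?thesis using that by blast
qed

lemma pow_split: "0 < r' \<Longrightarrow> (r::real)^k = r'^k * (r/r')^k"
  by (simp add: power_divide)

lemma pow_split': "0 < r' \<Longrightarrow> (a::real) * r^k = (a * r'^k) * (r/r')^k"
  by (simp add: power_divide)

lemma R_summable: assumes "R u" "0 \<le> r" "r < 1" shows "summable (\<lambda>k. \<bar>u k\<bar> * r^k)"
proof -
  obtain r' where r': "r < r'" "r' < 1" "0 < r'" "0 \<le> r/r'" "r/r' < 1" using R_split assms(2,3) by blast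
  obtain M where M: "\<And>k. \<bar>u k\<bar> * r'^k \<le> M" using RD[OF assms(1), of r'] r' by auto
  show ?thesis
  proof (rule summable_comparison_test')
    show "summable (\<lambda>k. M * (r/r')^k)" using r' assms by (intro summable_mult summable_geometric) auto
    fix k
    have "norm (\<bar>u k\<bar> * r^k) = \<bar>u k\<bar> * r^k" using assms by simp
    also have "\<dots> = (\<bar>u k\<bar> * r'^k) * (r/r')^k" by (rule pow_split'[OF r'(3)])
    also have "\<dots> \<le> M * (r/r')^k" using M r' by (intro mult_right_mono) auto
    finally show "norm (\<bar>u k\<bar> * r^k) \<le> M * (r/r')^k" .
  qed
qed

lemma R_mono: assumes "R u" "\<And>k. \<bar>v k\<bar> \<le> \<bar>u k\<bar>" shows "R v"
  unfolding R_def
proof (intro allI impI)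
  fix r :: real assume r: "0 \<le> r" "r < 1"
  obtain M where M: "\<And>k. \<bar>u k\<bar> * r^k \<le> M" using RD[OF assms(1) r] by blast
  have "\<bar>v k\<bar> * r^k \<le> M" for k
    using mult_right_mono[OF assms(2)[of k], of "r^k"] M[of k] r by simp
  thus "\<exists>M. \<forall>k. \<bar>v k\<bar> * r ^ k \<le> M" by blast
qed

lemma R_bounded: "(\<And>k. \<bar>u k\<bar> \<le> B) \<Longrightarrow> R u"
  unfolding R_def
proof (intro allI impI)
  fix r :: real assume h: "\<And>k. \<bar>u k\<bar> \<le> B" "0 \<le> r" "r < 1"
  have "\<bar>u k\<bar> * r^k \<le> \<bar>B\<bar>" for k
  proof -
    have "\<bar>u k\<bar> * r^k \<le> \<bar>u k\<bar> * 1" using h by (intro mult_left_mono power_le_one) auto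
    thus ?thesis using h(1)[of k] by simp
  qed
  thus "\<exists>M. \<forall>k. \<bar>u k\<bar> * r ^ k \<le> M" by blast
qed

lemma R_add: assumes "R u" "R v" shows "R (\<lambda>k. u k + v k)"
  unfolding R_def
proof (intro allI impI)
  fix r :: real assume r: "0 \<le> r" "r < 1"
  obtain M1 M2 where M: "\<And>k. \<bar>u k\<bar> * r^k \<le> M1" "\<And>k. \<bar>v k\<bar> * r^k \<le> M2"
    using RD[OF assms(1) r] RD[OF assms(2) r] by blast
  have "\<bar>u k + v k\<bar> * r^k \<le> M1 + M2" for k
  proof -
    have "\<bar>u k + v k\<bar> * r^k \<le> (\<bar>u k\<bar> + \<bar>v k\<bar>) * r^k" using r by (intro mult_right_mono) auto
    thus ?thesis using M[of k] by (simp add: algebra_simps)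
  qed
  thus "\<exists>M. \<forall>k. \<bar>u k + v k\<bar> * r ^ k \<le> M" by blast
qed

lemma R_cmult: assumes "R u" shows "R (\<lambda>k. a * u k)"
  unfolding R_def
proof (intro allI impI)
  fix r :: real assume r: "0 \<le> r" "r < 1"
  obtain M where M: "\<And>k. \<bar>u k\<bar> * r^k \<le> M" using RD[OF assms r] by blast
  have "\<bar>a * u k\<bar> * r^k \<le> \<bar>a\<bar> * M" for k
    using mult_left_mono[OF M[of k], of "\<bar>a\<bar>"] by (simp add: abs_mult mult.assoc)
  thus "\<exists>M. \<forall>k. \<bar>a * u k\<bar> * r ^ k \<le> M" by blast
qed

lemma R_diff: "R u \<Longrightarrow> R v \<Longrightarrow> R (\<lambda>k. u k - v k)"
  using R_add[of u "\<lambda>k. (-1) * v k"] R_cmult[of v "-1"] by simp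

lemma R_Nmult: assumes "R u" shows "R (\<lambda>k. real k * u k)"
  unfolding R_def
proof (intro allI impI)
  fix r :: real assume r: "0 \<le> r" "r < 1"
  obtain r' where r': "r < r'" "r' < 1" "0 < r'" "0 \<le> r/r'" "r/r' < 1" using R_split r by blast
  obtain M where M: "\<And>k. \<bar>u k\<bar> * r'^k \<le> M" using RD[OF assms, of r'] r' by auto
  obtain B where B: "\<And>k. real k * (r/r')^k \<le> B" using kq_bounded[of "r/r'"] r' by auto
  have M0: "0 \<le> M" using M[of 0] by simp
  have "\<bar>real k * u k\<bar> * r^k \<le> M * B" for k
  proof -
    have "\<bar>real k * u k\<bar> * r^k = (\<bar>u k\<bar> * r'^k) * (real k * (r/r')^k)"
      using pow_split'[OF r'(3), of "\<bar>u k\<bar>" r k] by (simp add: abs_mult mult_ac)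
    also have "\<dots> \<le> M * B" using M[of k] B[of k] r' M0
      by (intro mult_mono) auto
    finally show ?thesis .
  qed
  thus "\<exists>M. \<forall>k. \<bar>real k * u k\<bar> * r ^ k \<le> M" by blast
qed

lemma R_shift: assumes "R u" shows "R (\<lambda>k. u (Suc k))"
  unfolding R_def
proof (intro allI impI)
  fix r :: real assume r: "0 \<le> r" "r < 1"
  obtain r' where r': "r < r'" "r' < 1" "0 < r'" "0 \<le> r/r'" "r/r' < 1" using R_split r by blast
  obtain M where M: "\<And>k. \<bar>u k\<bar> * r'^k \<le> M" using RD[OF assms, of r'] r' by auto
  have "\<bar>u (Suc k)\<bar> * r^k \<le> M / r'" for k
  proof -
    have "\<bar>u (Suc k)\<bar> * r^k \<le> \<bar>u (Suc k)\<bar> * r'^k" using r r' by (intro mult_left_mono power_mono) auto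
    also have "\<dots> = (\<bar>u (Suc k)\<bar> * r'^(Suc k)) / r'" using r' by simp
    also have "\<dots> \<le> M / r'" using M[of "Suc k"] r' by (intro divide_right_mono) auto
    finally show ?thesis .
  qed
  thus "\<exists>M. \<forall>k. \<bar>u (Suc k)\<bar> * r ^ k \<le> M" by blast
qed

lemma R_psum: assumes "R u" shows "R (\<lambda>k. \<Sum>m<k. u m)"
  unfolding R_def
proof (intro allI impI)
  fix r :: real assume r: "0 \<le> r" "r < 1"
  obtain r' where r': "r < r'" "r' < 1" "0 < r'" "0 \<le> r/r'" "r/r' < 1" using R_split r by blast
  obtain M where M: "\<And>k. \<bar>u k\<bar> * r'^k \<le> M" using RD[OF assms, of r'] r' by auto
  obtain B where B: "\<And>k. real k * (r/r')^k \<le> B" using kq_bounded[of "r/r'"] r' by auto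
  have M0: "0 \<le> M" using M[of 0] by simp
  have "\<bar>\<Sum>m<k. u m\<bar> * r^k \<le> M * B" for k
  proof -
    have "\<bar>\<Sum>m<k. u m\<bar> * r^k \<le> (\<Sum>m<k. \<bar>u m\<bar>) * r^k" using r by (intro mult_right_mono sum_abs) auto
    also have "\<dots> = (\<Sum>m<k. \<bar>u m\<bar> * r^k)" by (simp add: sum_distrib_right)
    also have "\<dots> \<le> (\<Sum>m<k. M * (r/r')^k)"
    proof (rule sum_mono)
      fix m assume "m \<in> {..<k}"
      hence mk: "m \<le> k" by simp
      have "\<bar>u m\<bar> * r^k = (\<bar>u m\<bar> * r'^k) * (r/r')^k" by (rule pow_split'[OF r'(3)])
      also have "\<dots> \<le> (\<bar>u m\<bar> * r'^m) * (r/r')^k"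
        using r' mk by (intro mult_right_mono mult_left_mono power_decreasing) auto
      also have "\<dots> \<le> M * (r/r')^k" using M[of m] r' by (intro mult_right_mono) auto
      finally show "\<bar>u m\<bar> * r^k \<le> M * (r/r')^k" .
    qed
    also have "\<dots> = M * (real k * (r/r')^k)" by simp
    also have "\<dots> \<le> M * B" using B[of k] M0 by (intro mult_left_mono) auto
    finally show ?thesis .
  qed
  thus "\<exists>M. \<forall>k. \<bar>\<Sum>m<k. u m\<bar> * r ^ k \<le> M" by blast
qed

definition ser :: "(nat \<Rightarrow> real) \<Rightarrow> real \<Rightarrow> real" where
  "ser u x = (\<Sum>k. u k * bc k * (x^2)^k)"

lemma ps_summable: assumes "R u" "\<bar>z\<bar> < 1" shows "summable (\<lambda>k. u k * bc k * z^k)"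
proof (rule summable_comparison_test')
  show "summable (\<lambda>k. \<bar>u k\<bar> * \<bar>z\<bar>^k)" using R_summable[OF assms(1), of "\<bar>z\<bar>"] assms by auto
  fix k
  have "\<bar>u k * bc k * z^k\<bar> = \<bar>u k\<bar> * bc k * \<bar>z\<bar>^k" using bc_pos[of k] by (simp add: abs_mult power_abs)
  also have "\<dots> \<le> \<bar>u k\<bar> * 1 * \<bar>z\<bar>^k" using bc_le1[of k] by (intro mult_right_mono mult_left_mono) auto
  finally show "norm (u k * bc k * z^k) \<le> \<bar>u k\<bar> * \<bar>z\<bar>^k" by simp
qed

lemma x2_lt1': "\<bar>x::real\<bar> < 1 \<Longrightarrow> x^2 < 1"
  by (simp add: abs_square_less_1)

lemma x2_lt1: "\<bar>x::real\<bar> < 1 \<Longrightarrow> \<bar>x^2\<bar> < 1"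
  by (simp add: abs_square_less_1)

lemma ser_sums: "R u \<Longrightarrow> \<bar>x\<bar> < 1 \<Longrightarrow> (\<lambda>k. u k * bc k * (x^2)^k) sums ser u x"
  unfolding ser_def using ps_summable[of u "x^2"] x2_lt1 by (simp add: summable_sums)

lemma ser_add: assumes "R u" "R v" "\<bar>x\<bar> < 1" shows "ser (\<lambda>k. u k + v k) x = ser u x + ser v x"
proof -
  have "(\<lambda>k. (u k + v k) * bc k * (x^2)^k) sums (ser u x + ser v x)"
    using sums_add[OF ser_sums[OF assms(1,3)] ser_sums[OF assms(2,3)]] by (simp add: algebra_simps)
  thus ?thesis unfolding ser_def by (simp add: sums_iff)
qed

lemma ser_cmult: assumes "R u" "\<bar>x\<bar> < 1" shows "ser (\<lambda>k. a * u k) x = a * ser u x"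
proof -
  have "(\<lambda>k. (a * u k) * bc k * (x^2)^k) sums (a * ser u x)"
    using sums_mult[OF ser_sums[OF assms(1,2)], of a] by (simp add: algebra_simps)
  thus ?thesis unfolding ser_def by (simp add: sums_iff)
qed

lemma ser_diff: "R u \<Longrightarrow> R v \<Longrightarrow> \<bar>x\<bar> < 1 \<Longrightarrow> ser (\<lambda>k. u k - v k) x = ser u x - ser v x"
  using ser_add[of u "\<lambda>k. (-1) * v k" x] ser_cmult[of v x "-1"] R_cmult[of v "-1"] by simp

lemma S1: assumes "R u" "\<bar>x\<bar> < 1"
  shows "ser (\<lambda>k. 2 * real k * u k) x = x^2 * ser (\<lambda>k. (2*real k+1) * u (Suc k)) x"
proof -
  define z where "z = x^2"
  have R1: "R (\<lambda>k. 2 * real k * u k)" using R_cmult[OF R_Nmult[OF assms(1)], of 2] by (simp add: mult.assoc)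
  have R2: "R (\<lambda>k. (2*real k+1) * u (Suc k))"
  proof -
    have "R (\<lambda>k. 2 * (real k * u (Suc k)) + u (Suc k))"
      using R_add[OF R_cmult[OF R_Nmult[OF R_shift[OF assms(1)]], of 2] R_shift[OF assms(1)]] by simp
    thus ?thesis by (simp add: algebra_simps)
  qed
  have s1: "(\<lambda>k. 2 * real k * u k * bc k * z^k) sums ser (\<lambda>k. 2 * real k * u k) x"
    using ser_sums[OF R1 assms(2)] by (simp add: z_def)
  hence "(\<lambda>k. 2 * real (Suc k) * u (Suc k) * bc (Suc k) * z^(Suc k)) sums ser (\<lambda>k. 2 * real k * u k) x"
    by (subst sums_Suc_iff) simp
  moreover have "(\<lambda>k. 2 * real (Suc k) * u (Suc k) * bc (Suc k) * z^(Suc k)) =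
      (\<lambda>k. z * ((2*real k+1) * u (Suc k) * bc k * z^k))"
  proof
    fix k
    have "2 * real (Suc k) * bc (Suc k) = (2*real k+1) * bc k" using bc_Suc[of k] by (simp add: algebra_simps)
    hence h: "2 * real (Suc k) * bc (Suc k) = (2*real k+1) * bc k" .
    have "2 * real (Suc k) * u (Suc k) * bc (Suc k) * z^(Suc k) = (2 * real (Suc k) * bc (Suc k)) * u (Suc k) * (z * z^k)"
      by (simp add: mult_ac)
    also have "\<dots> = (2*real k+1) * bc k * u (Suc k) * (z * z^k)" by (simp only: h)
    also have "\<dots> = z * ((2*real k+1) * u (Suc k) * bc k * z^k)" by (simp add: mult_ac)
    finally show "2 * real (Suc k) * u (Suc k) * bc (Suc k) * z^(Suc k) = z * ((2*real k+1) * u (Suc k) * bc k * z^k)" .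
  qed
  moreover have "(\<lambda>k. z * ((2*real k+1) * u (Suc k) * bc k * z^k)) sums (z * ser (\<lambda>k. (2*real k+1) * u (Suc k)) x)"
    using sums_mult[OF ser_sums[OF R2 assms(2)], of z] by (simp add: z_def)
  ultimately show ?thesis by (simp add: z_def sums_unique2)
qed

definition dser :: "(nat \<Rightarrow> real) \<Rightarrow> real \<Rightarrow> real" where
  "dser u x = (\<Sum>n. diffs (\<lambda>k. u k * bc k) n * (x^2)^n) * (2*x)"

lemma ser_deriv: fixes x :: real assumes "R u" "\<bar>x\<bar> < 1" shows "(ser u has_real_derivative dser u x) (at x)"
proof -
  have sm: "\<And>z. norm z < 1 \<Longrightarrow> summable (\<lambda>n. (u n * bc n) * z^n)"
    using ps_summable[OF assms(1)] by simp
  have n: "norm (x^2) < 1" using x2_lt1'[OF assms(2)] by simp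
  have d1: "((\<lambda>z. \<Sum>n. (u n * bc n) * z^n) has_field_derivative (\<Sum>n. diffs (\<lambda>k. u k * bc k) n * (x^2)^n)) (at (x^2))"
    by (rule termdiffs_strong'[OF sm n])
  have d2: "((\<lambda>x. x^2) has_real_derivative 2*x) (at x)"
    by (auto intro!: derivative_eq_intros)
  show ?thesis unfolding ser_def dser_def
    using DERIV_chain2[OF d1 d2] by simp
qed

lemma x_dser: fixes x :: real assumes "R u" "\<bar>x\<bar> < 1" shows "x * dser u x = ser (\<lambda>k. 2 * real k * u k) x"
proof -
  define z where "z = x^2"
  define q where "q = (\<lambda>k. u k * bc k)"
  have sm: "\<And>z. norm z < 1 \<Longrightarrow> summable (\<lambda>n. q n * z^n)"
    using ps_summable[OF assms(1)] by (simp add: q_def)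
  have "summable (\<lambda>n. diffs q n * z^n)"
    by (rule termdiff_converges[OF _ sm]) (use x2_lt1'[OF assms(2)] in \<open>simp add: z_def\<close>)
  hence s: "(\<lambda>n. 2 * z * (diffs q n * z^n)) sums (2 * z * (\<Sum>n. diffs q n * z^n))"
    by (intro sums_mult summable_sums)
  have R1: "R (\<lambda>k. 2 * real k * u k)" using R_cmult[OF R_Nmult[OF assms(1)], of 2] by (simp add: mult.assoc)
  have s1: "(\<lambda>k. 2 * real k * u k * bc k * z^k) sums ser (\<lambda>k. 2 * real k * u k) x"
    using ser_sums[OF R1 assms(2)] by (simp add: z_def)
  hence "(\<lambda>k. 2 * real (Suc k) * u (Suc k) * bc (Suc k) * z^(Suc k)) sums ser (\<lambda>k. 2 * real k * u k) x"
    by (subst sums_Suc_iff) simp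
  moreover have "(\<lambda>k. 2 * real (Suc k) * u (Suc k) * bc (Suc k) * z^(Suc k)) = (\<lambda>n. 2 * z * (diffs q n * z^n))"
    by (simp add: diffs_def q_def algebra_simps)
  ultimately have "2 * z * (\<Sum>n. diffs q n * z^n) = ser (\<lambda>k. 2 * real k * u k) x"
    using s sums_unique2 by metis
  thus ?thesis unfolding dser_def q_def z_def by (simp add: algebra_simps power2_eq_square)
qed



definition OI :: "(real \<Rightarrow> real) \<Rightarrow> real \<Rightarrow> real \<Rightarrow> bool" where
  "OI h y v \<longleftrightarrow> (if 0 \<le> y then (h has_integral v) {0..y} else (h has_integral (-v)) {y..0})"

lemma OI_oint: "OI h y v \<Longrightarrow> oint 0 y h = v"
  unfolding OI_def oint_def by (auto split: if_splits dest: integral_unique)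

lemma OI_diff: "OI h1 y v1 \<Longrightarrow> OI h2 y v2 \<Longrightarrow> OI (\<lambda>t. h1 t - h2 t) y (v1 - v2)"
  unfolding OI_def by (auto split: if_splits dest: has_integral_diff)

definition ival :: "real set \<Rightarrow> bool" where
  "ival D \<longleftrightarrow> (\<exists>a b. a < 0 \<and> 0 < b \<and> D = {a<..<b})"

lemma ival_sub: assumes "ival D" "y \<in> D" shows "0 \<le> y \<Longrightarrow> {0..y} \<subseteq> D" "y < 0 \<Longrightarrow> {y..0} \<subseteq> D" "0 \<in> D"
  using assms unfolding ival_def by auto

lemma ival_open: "ival D \<Longrightarrow> open D" unfolding ival_def by auto

lemma OI_FTC:
  assumes D: "ival D" "y \<in> D" and K: "continuous_on D K" and dK: "\<And>t. t \<in> D \<Longrightarrow> t \<noteq> 0 \<Longrightarrow> (K has_real_derivative k t) (at t)"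
  shows "OI k y (K y - K 0)"
proof (cases "0 \<le> y")
  case True
  have "(k has_integral (K y - K 0)) {0..y}"
  proof (rule fundamental_theorem_of_calculus_strong[of "{0}"])
    show "continuous_on {0..y} K" using continuous_on_subset[OF K ival_sub(1)[OF D True]] .
    fix x assume "x \<in> {0..y} - {0}"
    thus "(K has_vector_derivative k x) (at x)"
      using dK ival_sub(1)[OF D True] by (auto simp: has_real_derivative_iff_has_vector_derivative[symmetric])
  qed (use True in auto)
  thus ?thesis using True by (simp add: OI_def)
next
  case False
  have "(k has_integral (K 0 - K y)) {y..0}"
  proof (rule fundamental_theorem_of_calculus_strong[of "{0}"])
    show "continuous_on {y..0} K" using False continuous_on_subset[OF K ival_sub(2)[OF D]] by auto
    fix x assume "x \<in> {y..0} - {0}"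
    thus "(K has_vector_derivative k x) (at x)"
      using dK ival_sub(2)[OF D] False by (auto simp: has_real_derivative_iff_has_vector_derivative[symmetric])
  qed (use False in auto)
  thus ?thesis using False by (simp add: OI_def)
qed

lemma OI_cont:
  assumes D: "ival D" "y \<in> D" and k: "continuous_on D k"
  shows "OI k y (oint 0 y k)"
proof (cases "0 \<le> y")
  case True
  have "k integrable_on {0..y}"
    by (rule integrable_continuous_interval, rule continuous_on_subset[OF k ival_sub(1)[OF D True]])
  thus ?thesis using True by (simp add: OI_def oint_def has_integral_integrable_integral)
next
  case False
  have "k integrable_on {y..0}"
    by (rule integrable_continuous_interval, rule continuous_on_subset[OF k ival_sub(2)[OF D]]) (use False in auto)
  thus ?thesis using False by (simp add: OI_def oint_def has_integral_integrable_integral)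
qed

definition Iv :: "real set" where "Iv = {-(pi/2)<..<pi/2}"

lemma ival_Iv: "ival Iv" unfolding ival_def Iv_def by (intro exI[of _ "-(pi/2)"] exI[of _ "pi/2"]) auto

lemma Iv_cos: "t \<in> Iv \<Longrightarrow> cos t > 0" unfolding Iv_def by (auto intro: cos_gt_zero_pi)

lemma Iv_sin: assumes "t \<in> Iv" shows "\<bar>sin t\<bar> < 1"
proof -
  have "cos t > 0" using Iv_cos[OF assms] .
  hence "(sin t)^2 < 1" using sin_cos_squared_add[of t] by (smt (verit) zero_less_power)
  thus ?thesis by (simp add: abs_square_less_1)
qed

lemma Iv_sin0: assumes "t \<in> Iv" "t \<noteq> 0" shows "sin t \<noteq> 0"
  using assms sin_eq_0_pi[of t] unfolding Iv_def by auto

definition wld :: "((real \<Rightarrow> real) \<Rightarrow> real \<Rightarrow> real) \<Rightarrow> ((real \<Rightarrow> real) \<Rightarrow> real \<Rightarrow> real)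
   \<Rightarrow> (real \<Rightarrow> real) \<Rightarrow> (real \<Rightarrow> real) \<Rightarrow> real set \<Rightarrow> bool" where
  "wld P Q \<psi> j D \<longleftrightarrow> ival D \<and> (\<forall>u\<in>D. \<psi> u \<in> Iv) \<and> \<psi> 0 = 0 \<and> (\<forall>u\<in>D. \<psi> u = 0 \<longrightarrow> u = 0)
     \<and> (\<forall>u\<in>D. (\<psi> has_real_derivative j u) (at u)) \<and> continuous_on D j
     \<and> (\<forall>f u. u \<in> D \<longrightarrow> P f u = f (\<psi> u) * j u) \<and> (\<forall>F u. u \<in> D \<longrightarrow> Q F u = F (\<psi> u))"

lemma wld_psi_cont: "wld P Q \<psi> j D \<Longrightarrow> continuous_on D \<psi>"
  unfolding wld_def by (meson DERIV_isCont continuous_at_imp_continuous_on)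

lemma wld_comp_cont:
  assumes "wld P Q \<psi> j D" "continuous_on Iv H" shows "continuous_on D (\<lambda>u. H (\<psi> u))"
proof -
  have "continuous_on D (H \<circ> \<psi>)"
    by (rule continuous_on_compose[OF wld_psi_cont[OF assms(1)] continuous_on_subset[OF assms(2)]])
       (use assms(1) in \<open>auto simp: wld_def\<close>)
  thus ?thesis by (simp add: o_def)
qed

lemma world_Fo:
  assumes w: "wld P Q \<psi> j D" and H: "continuous_on Iv H" "H 0 = 0"
    and dH: "\<And>t. t \<in> Iv \<Longrightarrow> t \<noteq> 0 \<Longrightarrow> (H has_real_derivative f t * g t) (at t)"
    and G: "\<And>u. u \<in> D \<Longrightarrow> G u = g (\<psi> u)" and u: "u \<in> D"
  shows "form_op (P f) G u = H (\<psi> u)"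
proof -
  have D: "ival D" using w by (simp add: wld_def)
  have "OI (\<lambda>t. P f t * G t) u (H (\<psi> u) - H (\<psi> 0))"
  proof (rule OI_FTC[OF D u wld_comp_cont[OF w H(1)]])
    fix t assume t: "t \<in> D" "t \<noteq> 0"
    have pt: "\<psi> t \<in> Iv" "\<psi> t \<noteq> 0" using w t by (auto simp: wld_def)
    have dp: "(\<psi> has_real_derivative j t) (at t)" using w t by (auto simp: wld_def)
    have "((\<lambda>u. H (\<psi> u)) has_real_derivative (f (\<psi> t) * g (\<psi> t)) * j t) (at t)"
      by (rule DERIV_chain2[OF dH[OF pt] dp])
    moreover have "(f (\<psi> t) * g (\<psi> t)) * j t = P f t * G t"
      using w t G[OF t(1)] by (simp add: wld_def)
    ultimately show "((\<lambda>u. H (\<psi> u)) has_real_derivative P f t * G t) (at t)" by simp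
  qed
  thus ?thesis using w H(2) unfolding form_op_def by (simp add: OI_oint wld_def)
qed

lemma world_Fo_diff:
  assumes w: "wld P Q \<psi> j D" and K: "continuous_on Iv K" "K 0 = 0"
    and dK: "\<And>t. t \<in> Iv \<Longrightarrow> t \<noteq> 0 \<Longrightarrow> (K has_real_derivative (ff t * g t - f t * h t)) (at t)"
    and c2: "continuous_on Iv (\<lambda>t. ff t * g t)"
    and G: "\<And>u. u \<in> D \<Longrightarrow> G u = g (\<psi> u)" and Hh: "\<And>u. u \<in> D \<Longrightarrow> Hh u = h (\<psi> u)" and u: "u \<in> D"
  shows "form_op (P f) Hh u = form_op (P ff) G u - K (\<psi> u)"
proof -
  have D: "ival D" using w by (simp add: wld_def)
  have cA: "continuous_on D (\<lambda>t. P ff t * G t)"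
  proof -
    have "continuous_on D (\<lambda>t. (ff (\<psi> t) * g (\<psi> t)) * j t)"
      using continuous_on_mult[OF wld_comp_cont[OF w c2], of j] w by (auto simp: wld_def)
    moreover have "\<And>t. t \<in> D \<Longrightarrow> (ff (\<psi> t) * g (\<psi> t)) * j t = P ff t * G t"
      using w G by (simp add: wld_def)
    ultimately show ?thesis using continuous_on_cong by (metis (no_types, lifting))
  qed
  have A: "OI (\<lambda>t. P ff t * G t) u (oint 0 u (\<lambda>t. P ff t * G t))" by (rule OI_cont[OF D u cA])
  have B: "OI (\<lambda>t. P ff t * G t - P f t * Hh t) u (K (\<psi> u) - K (\<psi> 0))"
  proof (rule OI_FTC[OF D u wld_comp_cont[OF w K(1)]])
    fix t assume t: "t \<in> D" "t \<noteq> 0"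
    have pt: "\<psi> t \<in> Iv" "\<psi> t \<noteq> 0" using w t by (auto simp: wld_def)
    have dp: "(\<psi> has_real_derivative j t) (at t)" using w t by (auto simp: wld_def)
    have "((\<lambda>u. K (\<psi> u)) has_real_derivative (ff (\<psi> t) * g (\<psi> t) - f (\<psi> t) * h (\<psi> t)) * j t) (at t)"
      by (rule DERIV_chain2[OF dK[OF pt] dp])
    moreover have "(ff (\<psi> t) * g (\<psi> t) - f (\<psi> t) * h (\<psi> t)) * j t = P ff t * G t - P f t * Hh t"
      using w t G[OF t(1)] Hh[OF t(1)] by (simp add: wld_def algebra_simps)
    ultimately show "((\<lambda>u. K (\<psi> u)) has_real_derivative P ff t * G t - P f t * Hh t) (at t)" by simp
  qed
  have "OI (\<lambda>t. P f t * Hh t) u (oint 0 u (\<lambda>t. P ff t * G t) - (K (\<psi> u) - K (\<psi> 0)))"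
    using OI_diff[OF A B] by simp
  thus ?thesis using w K(2) unfolding form_op_def by (simp add: OI_oint wld_def)
qed

lemma world_Fu: "wld P Q \<psi> j D \<Longrightarrow> u \<in> D \<Longrightarrow> fun_op (Q F) G u = F (\<psi> u) * G u"
  unfolding fun_op_def wld_def by simp

lemma wld_lam: "wld id id id (\<lambda>_. 1) Iv"
  unfolding wld_def using ival_Iv DERIV_ident by (auto simp: id_def intro!: continuous_intros)

lemma wld_Lam: "wld (\<lambda>f t. f (arcsin t) / sqrt (1 - t^2)) (\<lambda>F t. F (arcsin t)) arcsin (\<lambda>t. 1 / sqrt (1 - t^2)) {-1<..<1}"
  unfolding wld_def
proof (intro conjI ballI allI impI)
  show "ival {-1<..<1::real}" unfolding ival_def by (intro exI[of _ "-1"] exI[of _ 1]) auto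
  fix u :: real assume u: "u \<in> {-1<..<1}"
  show "arcsin u \<in> Iv" using arcsin_lt_bounded[of u] u by (auto simp: Iv_def)
  show "arcsin u = 0 \<Longrightarrow> u = 0" using u by (metis sin_arcsin sin_zero greaterThanLessThan_iff less_eq_real_def)
  show "(arcsin has_real_derivative 1 / sqrt (1 - u^2)) (at u)"
    using DERIV_arcsin[of u] u by (simp add: inverse_eq_divide)
next
  show "continuous_on {-1<..<1} (\<lambda>t::real. 1 / sqrt (1 - t^2))"
  proof -
    have "\<And>t::real. t \<in> {-1<..<1} \<Longrightarrow> sqrt (1 - t^2) \<noteq> 0"
    proof -
      fix t :: real assume "t \<in> {-1<..<1}"
      hence "t^2 < 1" by (simp add: abs_square_less_1 abs_less_iff)
      thus "sqrt (1 - t^2) \<noteq> 0" by simp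
    qed
    thus ?thesis by (auto intro!: continuous_intros)
  qed
qed auto



definition N :: "(nat \<Rightarrow> real) \<Rightarrow> nat \<Rightarrow> real" where "N u = (\<lambda>k. 2 * real k * u k)"
definition psum :: "(nat \<Rightarrow> real) \<Rightarrow> nat \<Rightarrow> real" where "psum c = (\<lambda>k. \<Sum>m<k. c m)"

lemma R_N: "R u \<Longrightarrow> R (N u)"
  unfolding N_def using R_cmult[OF R_Nmult, of u 2] by (simp add: mult.assoc)
lemma R_ps: "R u \<Longrightarrow> R (psum u)" unfolding psum_def by (rule R_psum)
lemma psum_0: "psum c 0 = 0" by (simp add: psum_def)
lemma psum_Suc: "psum c (Suc k) = psum c k + c k" by (simp add: psum_def)

lemma DERIV_eqD: "(f has_real_derivative D) F \<Longrightarrow> D = D' \<Longrightarrow> (f has_real_derivative D') F" by simp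

lemma sr_deriv: assumes "R u" "t \<in> Iv"
  shows "((\<lambda>t. ser u (sin t)) has_real_derivative dser u (sin t) * cos t) (at t)"
  using DERIV_chain2[OF ser_deriv[OF assms(1) Iv_sin[OF assms(2)]] DERIV_sin] .

lemma sr_deriv': assumes "R u" "t \<in> Iv" "t \<noteq> 0"
  shows "((\<lambda>t. ser u (sin t)) has_real_derivative cos t * ser (N u) (sin t) / sin t) (at t)"
proof (rule DERIV_eqD[OF sr_deriv[OF assms(1,2)]])
  have "sin t * dser u (sin t) = ser (N u) (sin t)" using x_dser[OF assms(1) Iv_sin[OF assms(2)]] by (simp add: N_def)
  thus "dser u (sin t) * cos t = cos t * ser (N u) (sin t) / sin t" using Iv_sin0[OF assms(2,3)]
    by (simp add: field_simps)
qed

lemma sr_cont: assumes "R u" shows "continuous_on Iv (\<lambda>t. ser u (sin t))"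
  using sr_deriv[OF assms] by (meson DERIV_isCont continuous_at_imp_continuous_on)

lemma ser_at0: "u 0 = 0 \<Longrightarrow> ser u 0 = 0"
  unfolding ser_def using powser_zero[of "\<lambda>k. u k * bc k"] by simp

lemma K1_alg: fixes s co G NG E NE :: real
  assumes "s \<noteq> 0" "co \<noteq> 0" "s^2*(G+NG+E) = co^2*NE"
  shows "(s + inverse (co^2) * s) * G + NG * s - (co * NE * co / s - s * E) = s * G / (co*co)"
proof -
  have "co*NE*co/s = s*(G+NG+E)" using assms by (simp add: field_simps power2_eq_square)
  thus ?thesis using assms(1,2) by (simp add: field_simps power2_eq_square)
qed

lemma K1_key: assumes "R c" "\<bar>s\<bar> < 1"
  shows "s^2 * (ser c s + ser (N c) s + ser (psum c) s) = (1 - s^2) * ser (N (psum c)) s"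
proof -
  define e where "e = psum c"
  have Re: "R e" using R_ps[OF assms(1)] by (simp add: e_def)
  define W where "W = ser (\<lambda>k. (2*real k+1) * e (Suc k)) s"
  have hW: "ser (N e) s = s^2 * W" using S1[OF Re assms(2)] by (simp add: N_def W_def)
  have "ser c s + ser (N c) s + ser e s + ser (N e) s = ser (\<lambda>k. c k + N c k + e k + N e k) s"
    using assms Re R_N[OF assms(1)] R_N[OF Re]
    by (simp add: ser_add R_add)
  also have "(\<lambda>k. c k + N c k + e k + N e k) = (\<lambda>k. (2*real k+1) * e (Suc k))"
    by (simp add: e_def psum_Suc N_def algebra_simps)
  finally have hs: "ser c s + ser (N c) s + ser e s + ser (N e) s = W" by (simp add: W_def)
  have h1: "ser c s + ser (N c) s + ser e s = W - s^2 * W" using hs hW by simp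
  show ?thesis unfolding e_def[symmetric] h1 hW by algebra
qed

lemma K1_deriv: assumes "R c" "t \<in> Iv" "t \<noteq> 0"
  shows "((\<lambda>t. sin t * tan t * ser c (sin t) - cos t * ser (psum c) (sin t)) has_real_derivative
          sec_f t * tan t * ser c (sin t)) (at t)"
proof -
  have co: "cos t \<noteq> 0" using Iv_cos[OF assms(2)] by simp
  have s0: "sin t \<noteq> 0" using Iv_sin0[OF assms(2,3)] .
  have key: "(sin t)^2 * (ser c (sin t) + ser (N c) (sin t) + ser (psum c) (sin t)) = (cos t)^2 * ser (N (psum c)) (sin t)"
    using K1_key[OF assms(1) Iv_sin[OF assms(2)]] by (simp add: cos_squared_eq)
  note d0 = DERIV_diff[OF DERIV_mult[OF DERIV_mult[OF DERIV_sin DERIV_tan[OF co]] sr_deriv'[OF assms]]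
                     DERIV_mult[OF DERIV_cos sr_deriv'[OF R_ps[OF assms(1)] assms(2,3)]]]
  show ?thesis
    apply (rule DERIV_eqD[OF d0])
    using K1_alg[OF s0 co key] co s0 by (simp add: tan_def sec_f_def)
qed



definition outc :: "lkind \<Rightarrow> nat \<Rightarrow> (nat \<Rightarrow> real) \<Rightarrow> nat \<Rightarrow> real" where
  "outc kd s c = (\<lambda>m. psum c m / l_val kd m ^ s)"

lemma l_val_bound: "l_val kd k ^ s = 0 \<or> \<bar>l_val kd k ^ s\<bar> \<ge> 1"
proof (cases "k = 0")
  case True then show ?thesis by (cases kd; cases s) (auto simp: l_val_def power_abs)
next
  case False
  hence "\<bar>l_val kd k\<bar> \<ge> 1" by (cases kd) (auto simp: l_val_def)
  hence "\<bar>l_val kd k\<bar> ^ s \<ge> 1" by (simp add: one_le_power)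
  thus ?thesis by (simp add: power_abs)
qed

lemma R_outc: "R c \<Longrightarrow> R (outc kd s c)"
proof (rule R_mono[OF R_ps])
  fix k
  have "\<bar>psum c k / l_val kd k ^ s\<bar> \<le> \<bar>psum c k\<bar>"
    using l_val_bound[of kd k s]
    by (auto simp: abs_divide divide_le_eq_1 intro: divide_left_mono_neg mult_le_cancel_left1 simp: divide_le_eq mult_le_cancel_left1)
  thus "\<bar>outc kd s c k\<bar> \<le> \<bar>psum c k\<bar>" by (simp add: outc_def)
qed auto

lemma outc_0: "outc kd s c 0 = 0" by (simp add: outc_def psum_0)

lemma N_outc_even: "N (outc L_even (Suc j) c) = outc L_even j c"
proof
  fix k show "N (outc L_even (Suc j) c) k = outc L_even j c k"
    by (cases "k = 0") (auto simp: N_def outc_def l_val_def psum_0)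
qed

lemma divpow: "(a::real) \<noteq> 0 \<Longrightarrow> a * (x / a^(Suc j)) = x / a^j"
  by (simp add: field_simps)

lemma two_k_ne1: "(2 * real k - 1) \<noteq> 0"
proof
  assume "2*real k - 1 = 0"
  hence "real (2*k) = real 1" by simp
  hence "2*k = 1" by (simp only: of_nat_eq_iff)
  thus False by presburger
qed

lemma two_k_ne1': "(2 * real k + 1) \<noteq> 0"
proof -
  have "(2 * real k + 1) > 0" by simp
  thus ?thesis by simp
qed

lemma outc_odd: "outc L_odd (Suc j) c k + N (outc L_odd (Suc j) c) k = outc L_odd j c k"
proof -
  have o: "outc L_odd (Suc j) c k = psum c k / (2 * real k + 1)^(Suc j)"
    by (simp add: outc_def l_val_def del: power_Suc)
  have "outc L_odd (Suc j) c k + N (outc L_odd (Suc j) c) k = (2 * real k + 1) * outc L_odd (Suc j) c k"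
    by (simp add: N_def algebra_simps)
  also have "\<dots> = (2 * real k + 1) * (psum c k / (2 * real k + 1)^(Suc j))" by (simp only: o)
  also have "\<dots> = psum c k / (2 * real k + 1)^j" by (rule divpow[OF two_k_ne1'])
  finally show ?thesis by (simp add: outc_def l_val_def)
qed

lemma outc_oddm: "N (outc L_oddm (Suc j) c) k - outc L_oddm (Suc j) c k = outc L_oddm j c k"
proof -
  have o: "outc L_oddm (Suc j) c k = psum c k / (2 * real k - 1)^(Suc j)"
    by (simp add: outc_def l_val_def del: power_Suc)
  have "N (outc L_oddm (Suc j) c) k - outc L_oddm (Suc j) c k = (2 * real k - 1) * outc L_oddm (Suc j) c k"
    by (simp add: N_def algebra_simps)
  also have "\<dots> = (2 * real k - 1) * (psum c k / (2 * real k - 1)^(Suc j))" by (simp only: o)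
  also have "\<dots> = psum c k / (2 * real k - 1)^j" by (rule divpow[OF two_k_ne1])
  finally show ?thesis by (simp add: outc_def l_val_def)
qed

lemma outc_even0: "outc L_even 0 c = psum c" by (simp add: outc_def)
lemma outc_odd0: "outc L_odd 0 c = psum c" by (simp add: outc_def)

lemma Ev_deriv: assumes "R c" "t \<in> Iv" "t \<noteq> 0"
  shows "((\<lambda>t. ser (outc L_even (Suc j) c) (sin t)) has_real_derivative cot t * ser (outc L_even j c) (sin t)) (at t)"
  using sr_deriv'[OF R_outc[OF assms(1)] assms(2,3), of L_even "Suc j"]
  by (simp add: N_outc_even cot_def)

lemma Ev1_alg: assumes "R c" "t \<in> Iv" "t \<noteq> 0"
  shows "cot t * ser (outc L_even 0 c) (sin t) =
    tan t * ser c (sin t) - csc_f t * (sin t * tan t * ser c (sin t) - cos t * ser (psum c) (sin t))"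
  using Iv_sin0[OF assms(2,3)] by (simp add: outc_even0 cot_def csc_f_def field_simps)

lemma Od_deriv: assumes "R c" "t \<in> Iv" "t \<noteq> 0"
  shows "((\<lambda>t. sin t * ser (outc L_odd (Suc j) c) (sin t)) has_real_derivative cot t * (sin t * ser (outc L_odd j c) (sin t))) (at t)"
proof -
  have s0: "sin t \<noteq> 0" using Iv_sin0[OF assms(2,3)] .
  have Rs: "R (outc L_odd (Suc j) c)" using R_outc[OF assms(1)] .
  have e: "ser (outc L_odd (Suc j) c) (sin t) + ser (N (outc L_odd (Suc j) c)) (sin t) = ser (outc L_odd j c) (sin t)"
    using ser_add[OF Rs R_N[OF Rs] Iv_sin[OF assms(2)]] outc_odd[of j c] by simp
  note d0 = DERIV_mult[OF DERIV_sin sr_deriv'[OF Rs assms(2,3)]]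
  show ?thesis
    apply (rule DERIV_eqD[OF d0])
    using s0 e[symmetric] by (simp add: cot_def field_simps)
qed

lemma Od1_alg: assumes "t \<in> Iv" "t \<noteq> 0"
  shows "cot t * (sin t * ser (outc L_odd 0 c) (sin t)) =
    sin t * tan t * ser c (sin t) - 1 * (sin t * tan t * ser c (sin t) - cos t * ser (psum c) (sin t))"
  using Iv_sin0[OF assms] by (simp add: outc_odd0 cot_def field_simps)

lemma Om1_deriv: assumes "R c" "t \<in> Iv" "t \<noteq> 0"
  shows "((\<lambda>t. ser (outc L_oddm 1 c) (sin t) / cos t) has_real_derivative tan t * sec_f t * ser c (sin t)) (at t)"
proof -
  define s where "s = sin t"
  define co where "co = cos t"
  have s0: "s \<noteq> 0" using Iv_sin0[OF assms(2,3)] by (simp add: s_def)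
  have co0: "co \<noteq> 0" using Iv_cos[OF assms(2)] by (simp add: co_def)
  have sl: "\<bar>s\<bar> < 1" using Iv_sin[OF assms(2)] by (simp add: s_def)
  define m where "m = outc L_oddm 1 c"
  define e where "e = psum c"
  have Rm: "R m" using R_outc[OF assms(1)] by (simp add: m_def)
  have Re: "R e" using R_ps[OF assms(1)] by (simp add: e_def)
  have hS: "ser (N m) s = s^2 * ser (\<lambda>k. e (Suc k)) s"
  proof -
    have "(\<lambda>k. (2*real k+1) * m (Suc k)) = (\<lambda>k. e (Suc k))"
    proof
      fix k
      have a: "2*real (Suc k) - 1 = 2*real k + 1" by simp
      have o: "m (Suc k) = e (Suc k) / (2*real k+1)^(Suc 0)"
        by (simp add: m_def outc_def l_val_def e_def)
      have "(2*real k+1) * m (Suc k) = (2*real k+1) * (e (Suc k) / (2*real k+1)^(Suc 0))"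
        by (simp only: o)
      also have "\<dots> = e (Suc k)" using divpow[OF two_k_ne1', of k "e (Suc k)" 0] by simp
      finally show "(2*real k+1) * m (Suc k) = e (Suc k)" .
    qed
    thus ?thesis using S1[OF Rm sl] by (simp add: N_def)
  qed
  have hL: "ser (\<lambda>k. e (Suc k)) s - ser (N m) s + ser m s = ser c s"
  proof -
    have "ser (\<lambda>k. e (Suc k)) s - ser (N m) s + ser m s = ser (\<lambda>k. e (Suc k) - N m k + m k) s"
      using Rm Re sl R_N[OF Rm] R_shift[OF Re] by (simp add: ser_add ser_diff R_diff)
    also have "(\<lambda>k. e (Suc k) - N m k + m k) = c"
    proof
      fix k
      have o: "m k = psum c k / (2 * real k - 1)^(Suc 0)"
        by (simp add: m_def outc_def l_val_def)
      have "N m k - m k = (2 * real k - 1) * m k" by (simp add: N_def algebra_simps)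
      also have "\<dots> = (2 * real k - 1) * (psum c k / (2 * real k - 1)^(Suc 0))"
        by (simp only: o)
      also have "\<dots> = psum c k" using divpow[OF two_k_ne1, of k "psum c k" 0] by simp
      finally show "e (Suc k) - N m k + m k = c k"
        by (simp add: e_def psum_Suc)
    qed
    finally show ?thesis .
  qed
  have key: "co^2 * ser (N m) s + s^2 * ser m s = s^2 * ser c s"
  proof -
    have co2: "co^2 = 1 - s^2" by (simp add: co_def s_def cos_squared_eq)
    have c: "ser c s = ser (\<lambda>k. e (Suc k)) s - s^2 * ser (\<lambda>k. e (Suc k)) s + ser m s" using hL hS by simp
    show ?thesis unfolding co2 c hS by algebra
  qed
  note d0 = DERIV_divide[OF sr_deriv'[OF Rm assms(2,3)] DERIV_cos co0[unfolded co_def]]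
  show ?thesis unfolding m_def[symmetric]
    apply (rule DERIV_eqD[OF d0])
    using s0 co0 key
    by (simp add: tan_def sec_f_def field_simps power2_eq_square s_def co_def)
qed

lemma Om_deriv: assumes "R c" "t \<in> Iv" "t \<noteq> 0"
  shows "((\<lambda>t. ser (outc L_oddm (Suc j) c) (sin t) / sin t) has_real_derivative cos t * ser (outc L_oddm j c) (sin t) / (sin t)^2) (at t)"
proof -
  have s0: "sin t \<noteq> 0" using Iv_sin0[OF assms(2,3)] .
  define m where "m = outc L_oddm (Suc j) c"
  have Rm: "R m" using R_outc[OF assms(1)] by (simp add: m_def)
  have e: "ser (N m) (sin t) - ser m (sin t) = ser (outc L_oddm j c) (sin t)"
    using ser_diff[OF R_N[OF Rm] Rm Iv_sin[OF assms(2)]] outc_oddm[of j c] by (simp add: m_def)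
  note d0 = DERIV_divide[OF sr_deriv'[OF Rm assms(2,3)] DERIV_sin s0]
  show ?thesis unfolding m_def[symmetric]
    apply (rule DERIV_eqD[OF d0])
    using s0 e[symmetric] by (simp add: field_simps power2_eq_square e[symmetric] algebra_simps)
qed



lemma cos_Iv_nz: "\<forall>t\<in>Iv. cos t \<noteq> 0" using Iv_cos by force

lemma cont_h1: "R c \<Longrightarrow> continuous_on Iv (\<lambda>t. sin t * tan t * ser c (sin t) - cos t * ser (psum c) (sin t))"
  using sr_cont[of c] sr_cont[OF R_ps, of c] cos_Iv_nz
  by (auto intro!: continuous_intros)

lemma cont_tang: "R c \<Longrightarrow> continuous_on Iv (\<lambda>t. tan t * ser c (sin t))"
  using sr_cont[of c] cos_Iv_nz by (auto intro!: continuous_intros)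

lemma cont_stang: "R c \<Longrightarrow> continuous_on Iv (\<lambda>t. sin t * tan t * ser c (sin t))"
  using sr_cont[of c] cos_Iv_nz by (auto intro!: continuous_intros)

lemma cont_sin_sr: "R c \<Longrightarrow> continuous_on Iv (\<lambda>t. sin t * ser c (sin t))"
  using sr_cont[of c] by (auto intro!: continuous_intros)

lemma cont_sr_cos: "R c \<Longrightarrow> continuous_on Iv (\<lambda>t. ser c (sin t) / cos t)"
  using sr_cont[of c] cos_Iv_nz by (auto intro!: continuous_intros)

lemma phi_cont: assumes "R u" "u 0 = 0" shows "continuous_on {-1<..<1} (\<lambda>x. ser u x / x)"
proof (rule continuous_at_imp_continuous_on, rule ballI)
  fix x :: real assume x: "x \<in> {-1<..<1}"
  have xl: "\<bar>x\<bar> < 1" using x by auto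
  show "isCont (\<lambda>x. ser u x / x) x"
  proof (cases "x = 0")
    case False
    have "isCont (ser u) x" using ser_deriv[OF assms(1) xl] by (rule DERIV_isCont)
    thus ?thesis using False by (auto intro!: continuous_intros)
  next
    case True
    have z: "\<bar>0::real\<bar> < 1" by simp
    have "((\<lambda>y. (ser u y - ser u 0) / (y - 0)) \<longlongrightarrow> dser u 0) (at 0)"
      using ser_deriv[OF assms(1) z] by (simp add: has_field_derivative_iff)
    hence "((\<lambda>y. ser u y / y) \<longlongrightarrow> 0) (at 0)" by (simp add: ser_at0[of u, OF assms(2)] dser_def)
    thus ?thesis using True by (simp add: isCont_def)
  qed
qed

lemma cont_sr_sin: assumes "R u" "u 0 = 0" shows "continuous_on Iv (\<lambda>t. ser u (sin t) / sin t)"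
proof -
  have "continuous_on Iv ((\<lambda>x. ser u x / x) \<circ> sin)"
  proof (rule continuous_on_compose)
    show "continuous_on Iv sin" by (auto intro!: continuous_intros)
    show "continuous_on (sin ` Iv) (\<lambda>x. ser u x / x)"
      by (rule continuous_on_subset[OF phi_cont[OF assms]]) (use Iv_sin in \<open>auto simp: abs_less_iff\<close>)
  qed
  thus ?thesis by (simp add: o_def)
qed

lemma iter_Fo:
  assumes w: "wld P Q \<psi> j D"
    and F: "\<And>m. continuous_on Iv (F m)" "\<And>m. F m 0 = 0"
    and dF: "\<And>m t. t \<in> Iv \<Longrightarrow> t \<noteq> 0 \<Longrightarrow> (F (Suc m) has_real_derivative cot t * F m t) (at t)"
    and X: "\<And>u. u \<in> D \<Longrightarrow> X u = F 0 (\<psi> u)"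
  shows "u \<in> D \<Longrightarrow> ((form_op (P cot)) ^^ n) X u = F n (\<psi> u)"
proof (induction n arbitrary: u)
  case 0 then show ?case using X by simp
next
  case (Suc n)
  have "form_op (P cot) ((form_op (P cot) ^^ n) X) u = F (Suc n) (\<psi> u)"
    by (rule world_Fo[where H="F (Suc n)" and f=cot and g="F n", OF w F(1) F(2) dF]) (use Suc in auto)
  thus ?case by simp
qed

lemma level_even:
  assumes w: "wld P Q \<psi> j D" and c: "R c" and s: "s \<ge> 1"
    and G: "\<And>u. u \<in> D \<Longrightarrow> G u = ser c (sin (\<psi> u))" and u: "u \<in> D"
  shows "lam_gen P Q L_even s G u = ser (outc L_even s c) (sin (\<psi> u))"
proof -
  define h1 where "h1 = (\<lambda>t. sin t * tan t * ser c (sin t) - cos t * ser (psum c) (sin t))"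
  define g0 where "g0 = (\<lambda>t. ser c (sin t))"
  have G': "\<And>u. u \<in> D \<Longrightarrow> G u = g0 (\<psi> u)" using G by (simp add: g0_def)
  have A: "\<And>u. u \<in> D \<Longrightarrow> form_op (P (\<lambda>t. sec_f t * tan t)) G u = h1 (\<psi> u)"
  proof (rule world_Fo[where H=h1 and f="\<lambda>t. sec_f t * tan t" and g=g0 and G=G, OF w _ _ _ G'])
    show "continuous_on Iv h1" unfolding h1_def by (rule cont_h1[OF c])
    show "h1 0 = 0" by (simp add: h1_def ser_at0 psum_0)
    fix t assume "t \<in> Iv" "t \<noteq> 0"
    thus "(h1 has_real_derivative sec_f t * tan t * g0 t) (at t)"
      unfolding h1_def g0_def by (rule K1_deriv[OF c])
  qed
  define D1 where "D1 = (\<lambda>t. ser (outc L_even 1 c) (sin t))"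
  have B: "\<And>u. u \<in> D \<Longrightarrow> form_op (P csc_f) (form_op (P (\<lambda>t. sec_f t * tan t)) G) u = form_op (P tan) G u - D1 (\<psi> u)"
  proof (rule world_Fo_diff[where K=D1 and ff=tan and g=g0 and f=csc_f and h=h1 and G=G, OF w _ _ _ _ G' A])
    show "continuous_on Iv D1" unfolding D1_def by (rule sr_cont[OF R_outc[OF c]])
    show "D1 0 = 0" by (simp add: D1_def ser_at0 outc_0)
    show "continuous_on Iv (\<lambda>t. tan t * g0 t)" unfolding g0_def by (rule cont_tang[OF c])
    fix t assume t: "t \<in> Iv" "t \<noteq> 0"
    show "(D1 has_real_derivative tan t * g0 t - csc_f t * h1 t) (at t)"
      using Ev_deriv[OF c t, of 0] Ev1_alg[OF c t] unfolding D1_def g0_def h1_def by simp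
  qed
  define F where "F = (\<lambda>m t. ser (outc L_even (Suc m) c) (sin t))"
  have it: "((form_op (P cot)) ^^ (s - 1)) (\<lambda>y. form_op (P tan) G y - form_op (P csc_f) (form_op (P (\<lambda>t. sec_f t * tan t)) G) y) u
      = F (s - 1) (\<psi> u)"
  proof (rule iter_Fo[OF w])
    show "continuous_on Iv (F m)" for m unfolding F_def by (rule sr_cont[OF R_outc[OF c]])
    show "F m 0 = 0" for m by (simp add: F_def ser_at0 outc_0)
    show "(F (Suc m) has_real_derivative cot t * F m t) (at t)" if "t \<in> Iv" "t \<noteq> 0" for m t
      unfolding F_def by (rule Ev_deriv[OF c that])
    show "form_op (P tan) G u - form_op (P csc_f) (form_op (P (\<lambda>t. sec_f t * tan t)) G) u = F 0 (\<psi> u)"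
      if "u \<in> D" for u using B[OF that] by (simp add: F_def D1_def)
  qed (rule u)
  show ?thesis using it s unfolding lam_gen_def by (simp add: Let_def F_def)
qed



lemma level_odd:
  assumes w: "wld P Q \<psi> j D" and c: "R c" and s: "s \<ge> 1"
    and G: "\<And>u. u \<in> D \<Longrightarrow> G u = ser c (sin (\<psi> u))" and u: "u \<in> D"
  shows "lam_gen P Q L_odd s G u = ser (outc L_odd s c) (sin (\<psi> u))"
proof -
  define h1 where "h1 = (\<lambda>t. sin t * tan t * ser c (sin t) - cos t * ser (psum c) (sin t))"
  define g0 where "g0 = (\<lambda>t. ser c (sin t))"
  have G': "\<And>u. u \<in> D \<Longrightarrow> G u = g0 (\<psi> u)" using G by (simp add: g0_def)
  have A: "\<And>u. u \<in> D \<Longrightarrow> form_op (P (\<lambda>t. sec_f t * tan t)) G u = h1 (\<psi> u)"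
  proof (rule world_Fo[where H=h1 and f="\<lambda>t. sec_f t * tan t" and g=g0 and G=G, OF w _ _ _ G'])
    show "continuous_on Iv h1" unfolding h1_def by (rule cont_h1[OF c])
    show "h1 0 = 0" by (simp add: h1_def ser_at0 psum_0)
    fix t assume "t \<in> Iv" "t \<noteq> 0"
    thus "(h1 has_real_derivative sec_f t * tan t * g0 t) (at t)"
      unfolding h1_def g0_def by (rule K1_deriv[OF c])
  qed
  define F where "F = (\<lambda>m t. sin t * ser (outc L_odd (Suc m) c) (sin t))"
  have B: "\<And>u. u \<in> D \<Longrightarrow> form_op (P (\<lambda>t. 1)) (form_op (P (\<lambda>t. sec_f t * tan t)) G) u
        = form_op (P (\<lambda>t. sin t * tan t)) G u - F 0 (\<psi> u)"
  proof (rule world_Fo_diff[where K="F 0" and ff="\<lambda>t. sin t * tan t" and g=g0 and f="\<lambda>t. 1" and h=h1 and G=G, OF w _ _ _ _ G' A])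
    show "continuous_on Iv (F 0)" unfolding F_def by (rule cont_sin_sr[OF R_outc[OF c]])
    show "F 0 0 = 0" by (simp add: F_def)
    show "continuous_on Iv (\<lambda>t. sin t * tan t * g0 t)" unfolding g0_def by (rule cont_stang[OF c])
    fix t assume t: "t \<in> Iv" "t \<noteq> 0"
    show "(F 0 has_real_derivative sin t * tan t * g0 t - 1 * h1 t) (at t)"
      using Od_deriv[OF c t, of 0] Od1_alg[OF t, of c] unfolding F_def g0_def h1_def by simp
  qed
  have it: "((form_op (P cot)) ^^ (s - 1)) (\<lambda>y. form_op (P (\<lambda>t. sin t * tan t)) G y - form_op (P (\<lambda>t. 1)) (form_op (P (\<lambda>t. sec_f t * tan t)) G) y) u
      = F (s - 1) (\<psi> u)"
  proof (rule iter_Fo[OF w])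
    show "continuous_on Iv (F m)" for m unfolding F_def by (rule cont_sin_sr[OF R_outc[OF c]])
    show "F m 0 = 0" for m by (simp add: F_def)
    show "(F (Suc m) has_real_derivative cot t * F m t) (at t)" if "t \<in> Iv" "t \<noteq> 0" for m t
      unfolding F_def by (rule Od_deriv[OF c that])
    show "form_op (P (\<lambda>t. sin t * tan t)) G u - form_op (P (\<lambda>t. 1)) (form_op (P (\<lambda>t. sec_f t * tan t)) G) u = F 0 (\<psi> u)"
      if "u \<in> D" for u using B[OF that] by simp
  qed (rule u)
  have fin: "csc_f (\<psi> u) * F (s - 1) (\<psi> u) = ser (outc L_odd s c) (sin (\<psi> u))"
  proof (cases "\<psi> u = 0")
    case True thus ?thesis by (simp add: ser_at0 outc_0 csc_f_def)
  next
    case False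
    have "sin (\<psi> u) \<noteq> 0" using Iv_sin0[OF _ False] w u by (auto simp: wld_def)
    thus ?thesis using s by (simp add: F_def csc_f_def)
  qed
  show ?thesis using it fin world_Fu[OF w u] unfolding lam_gen_def by (simp add: Let_def)
qed

lemma level_oddm:
  assumes w: "wld P Q \<psi> j D" and c: "R c" and s: "s \<ge> 1"
    and G: "\<And>u. u \<in> D \<Longrightarrow> G u = ser c (sin (\<psi> u))" and u: "u \<in> D"
  shows "lam_gen P Q L_oddm s G u = ser (outc L_oddm s c) (sin (\<psi> u))"
proof -
  define g0 where "g0 = (\<lambda>t. ser c (sin t))"
  have G': "\<And>u. u \<in> D \<Longrightarrow> G u = g0 (\<psi> u)" using G by (simp add: g0_def)
  define M1 where "M1 = (\<lambda>t. ser (outc L_oddm 1 c) (sin t) / cos t)"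
  have A: "\<And>u. u \<in> D \<Longrightarrow> form_op (P (\<lambda>t. tan t * sec_f t)) G u = M1 (\<psi> u)"
  proof (rule world_Fo[where H=M1 and f="\<lambda>t. tan t * sec_f t" and g=g0 and G=G, OF w _ _ _ G'])
    show "continuous_on Iv M1" unfolding M1_def by (rule cont_sr_cos[OF R_outc[OF c]])
    show "M1 0 = 0" by (simp add: M1_def ser_at0 outc_0)
    fix t assume "t \<in> Iv" "t \<noteq> 0"
    thus "(M1 has_real_derivative tan t * sec_f t * g0 t) (at t)"
      unfolding M1_def g0_def by (rule Om1_deriv[OF c])
  qed
  have cpos: "cos (\<psi> u) > 0" using Iv_cos w u by (auto simp: wld_def)
  show ?thesis
  proof (cases "s = 1")
    case True
    have "lam_gen P Q L_oddm s G u = cos (\<psi> u) * M1 (\<psi> u)"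
      using True A[OF u] world_Fu[OF w u] unfolding lam_gen_def by (simp add: Let_def)
    thus ?thesis using cpos True by (simp add: M1_def)
  next
    case False
    define F where "F = (\<lambda>m t. ser (outc L_oddm (Suc (Suc m)) c) (sin t) / sin t)"
    have B: "\<And>u. u \<in> D \<Longrightarrow> form_op (P (\<lambda>t. 1 / (tan t)^2)) (form_op (P (\<lambda>t. tan t * sec_f t)) G) u = F 0 (\<psi> u)"
    proof (rule world_Fo[where H="F 0" and f="\<lambda>t. 1 / (tan t)^2" and g=M1, OF w _ _ _ A])
      show "continuous_on Iv (F 0)" unfolding F_def by (rule cont_sr_sin[OF R_outc[OF c] outc_0])
      show "F 0 0 = 0" by (simp add: F_def)
      fix t assume t: "t \<in> Iv" "t \<noteq> 0"
      have s0: "sin t \<noteq> 0" using Iv_sin0[OF t] .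
      have c0: "cos t \<noteq> 0" using Iv_cos[OF t(1)] by simp
      show "(F 0 has_real_derivative 1 / (tan t)^2 * M1 t) (at t)"
        unfolding F_def M1_def
        apply (rule DERIV_eqD[OF Om_deriv[OF c t, of "Suc 0"]])
        using s0 c0 by (simp add: tan_def field_simps power2_eq_square)
    qed
    have it: "((form_op (P cot)) ^^ (s - 2)) (form_op (P (\<lambda>t. 1 / (tan t)^2)) (form_op (P (\<lambda>t. tan t * sec_f t)) G)) u
      = F (s - 2) (\<psi> u)"
    proof (rule iter_Fo[OF w])
      show "continuous_on Iv (F m)" for m unfolding F_def by (rule cont_sr_sin[OF R_outc[OF c] outc_0])
      show "F m 0 = 0" for m by (simp add: F_def)
      show "(F (Suc m) has_real_derivative cot t * F m t) (at t)" if t: "t \<in> Iv" "t \<noteq> 0" for m t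
      proof -
        have s0: "sin t \<noteq> 0" using Iv_sin0[OF t] .
        show ?thesis
          unfolding F_def
          apply (rule DERIV_eqD[OF Om_deriv[OF c t, of "Suc (Suc m)"]])
          using s0 by (simp add: cot_def field_simps power2_eq_square)
      qed
      show "form_op (P (\<lambda>t. 1 / (tan t)^2)) (form_op (P (\<lambda>t. tan t * sec_f t)) G) u = F 0 (\<psi> u)"
        if "u \<in> D" for u using B[OF that] by simp
    qed (rule u)
    have fin: "sin (\<psi> u) * F (s - 2) (\<psi> u) = ser (outc L_oddm s c) (sin (\<psi> u))"
    proof (cases "\<psi> u = 0")
      case True thus ?thesis by (simp add: ser_at0 outc_0)
    next
      case False
      have "sin (\<psi> u) \<noteq> 0" using Iv_sin0[OF _ False] w u by (auto simp: wld_def)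
      moreover have "Suc (Suc (s - 2)) = s" using s \<open>s \<noteq> 1\<close> by simp
      ultimately show ?thesis by (simp add: F_def)
    qed
    show ?thesis using it fin world_Fu[OF w u] False unfolding lam_gen_def by (simp add: Let_def)
  qed
qed

lemma level:
  assumes w: "wld P Q \<psi> j D" and c: "R c" and s: "s \<ge> 1"
    and G: "\<And>u. u \<in> D \<Longrightarrow> G u = ser c (sin (\<psi> u))" and u: "u \<in> D"
  shows "lam_gen P Q kd s G u = ser (outc kd s c) (sin (\<psi> u))"
  by (cases kd) (use level_even[OF assms] level_odd[OF assms] level_oddm[OF assms] in auto)



fun coefw :: "(lkind \<times> nat) list \<Rightarrow> nat \<Rightarrow> nat \<Rightarrow> real" where
  "coefw [] n = (\<lambda>m. if m = n then 1 else 0)"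
| "coefw ((k,s)#zs) n = outc k s (coefw zs n)"

lemma R_coefw: "R (coefw zs n)"
proof (induction zs)
  case Nil show ?case by (simp, rule R_bounded[of _ 1]) auto
next
  case (Cons z zs) thus ?case by (cases z) (simp add: R_outc)
qed

lemma ser_single: "ser (coefw [] n) x = a_coef n x"
proof -
  have "(\<lambda>k. if k = n then bc k * (x^2)^k else 0) sums (bc n * (x^2)^n)" by (rule sums_single)
  moreover have "(\<lambda>k. (if k = n then 1 else 0) * bc k * (x^2)^k) = (\<lambda>k. if k = n then bc k * (x^2)^k else 0)"
    by auto
  ultimately show ?thesis by (simp add: ser_def a_coef_eq sums_iff)
qed

lemma word_world:
  assumes w: "wld P Q \<psi> j D" and s: "\<forall>z\<in>set zs. snd z \<ge> 1"
    and h: "\<And>u. u \<in> D \<Longrightarrow> h u = a_coef n (sin (\<psi> u))"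
  shows "u \<in> D \<Longrightarrow> foldr (\<lambda>(k, s) g. lam_gen P Q k s g) zs h u = ser (coefw zs n) (sin (\<psi> u))"
  using s
proof (induction zs arbitrary: u)
  case Nil thus ?case using h ser_single[of n "sin (\<psi> u)"] by simp
next
  case (Cons z zs)
  obtain k s where z: "z = (k, s)" by (cases z)
  have IH: "\<And>u. u \<in> D \<Longrightarrow> foldr (\<lambda>(k, s) g. lam_gen P Q k s g) zs h u = ser (coefw zs n) (sin (\<psi> u))"
    using Cons by auto
  have "lam_gen P Q k s (foldr (\<lambda>(k, s) g. lam_gen P Q k s g) zs h) u = ser (outc k s (coefw zs n)) (sin (\<psi> u))"
    by (rule level[OF w R_coefw _ IH Cons.prems(1)]) (use Cons.prems z in auto)
  thus ?case by (simp add: z)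
qed

lemma word_lam:
  assumes "\<forall>s\<in>set ss. s \<ge> 1" "y \<in> Iv"
  shows "word_val lam ks ss (\<lambda>t. a_coef n (sin t)) y = ser (coefw (zip ks ss) n) (sin y)"
proof -
  have s: "\<forall>z\<in>set (zip ks ss). snd z \<ge> 1" using assms(1) by (auto dest: set_zip_rightD)
  have "foldr (\<lambda>(k, s) g. lam_gen id id k s g) (zip ks ss) (\<lambda>t. a_coef n (sin t)) y = ser (coefw (zip ks ss) n) (sin (id y))"
    by (rule word_world[OF wld_lam s]) (use assms(2) in auto)
  thus ?thesis unfolding word_val_def lam_def by simp
qed

lemma word_Lam:
  assumes "\<forall>s\<in>set ss. s \<ge> 1" "-1 < x" "x < 1"
  shows "word_val Lam ks ss (\<lambda>t. a_coef n t) x = ser (coefw (zip ks ss) n) x"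
proof -
  have s: "\<forall>z\<in>set (zip ks ss). snd z \<ge> 1" using assms(1) by (auto dest: set_zip_rightD)
  have "foldr (\<lambda>(k, s) g. lam_gen (\<lambda>f t. f (arcsin t) / sqrt (1 - t^2)) (\<lambda>F t. F (arcsin t)) k s g) (zip ks ss) (\<lambda>t. a_coef n t) x
     = ser (coefw (zip ks ss) n) (sin (arcsin x))"
    by (rule word_world[OF wld_Lam s]) (use assms(2,3) in auto)
  thus ?thesis unfolding word_val_def Lam_def using assms(2,3) by simp
qed



fun TT :: "nat \<Rightarrow> nat \<Rightarrow> nat \<Rightarrow> nat list set" where
  "TT 0 n m = (if m = n then {[]} else {})"
| "TT (Suc d) n m = (\<lambda>ns. m # ns) ` (\<Union>j<m. TT d n j)"

lemma TT_finite: "finite (TT d n m)"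
  by (induction d arbitrary: m) auto

lemma TT_inv: "ns \<in> TT d n m \<Longrightarrow> length ns = d \<and> sorted_wrt (>) ns \<and> (\<forall>x\<in>set ns. n < x \<and> x \<le> m) \<and> n \<le> m
   \<and> (d > 0 \<longrightarrow> hd ns = m) \<and> (d = 0 \<longrightarrow> m = n)"
proof (induction d arbitrary: ns m)
  case 0 thus ?case by (auto split: if_splits)
next
  case (Suc d)
  then obtain j ns' where j: "j < m" "ns' \<in> TT d n j" "ns = m # ns'" by auto
  have IH: "length ns' = d \<and> sorted_wrt (>) ns' \<and> (\<forall>x\<in>set ns'. n < x \<and> x \<le> j) \<and> n \<le> j
     \<and> (d > 0 \<longrightarrow> hd ns' = j) \<and> (d = 0 \<longrightarrow> j = n)" using Suc.IH[OF j(2)] .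
  show ?case using IH j by force
qed

lemma TT_disj: "j \<noteq> j' \<Longrightarrow> TT d n j \<inter> TT d n j' = {}"
proof (cases d)
  case 0 thus "j \<noteq> j' \<Longrightarrow> ?thesis" by auto
next
  case (Suc d')
  assume "j \<noteq> j'"
  thus ?thesis using TT_inv[of _ d n j] TT_inv[of _ d n j'] Suc by auto
qed

lemma sorted_hd_ge: "sorted_wrt (>) (ns::nat list) \<Longrightarrow> x \<in> set ns \<Longrightarrow> x \<le> hd ns"
  by (cases ns) auto

lemma dec_TT: "ns \<in> dec_tuples d n \<Longrightarrow> d \<ge> 1 \<Longrightarrow> ns \<in> TT d n (hd ns)"
proof (induction d arbitrary: ns)
  case 0 thus ?case by simp
next
  case (Suc d)
  have len: "length ns = Suc d" and so: "sorted_wrt (>) ns" and gt: "\<forall>x\<in>set ns. n < x"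
    using Suc.prems by (auto simp: dec_tuples_def)
  then obtain m ns' where ns: "ns = m # ns'" by (cases ns) auto
  show ?case
  proof (cases "d = 0")
    case True
    hence "ns' = []" using len ns by simp
    moreover have "n < m" using gt ns by simp
    ultimately show ?thesis using ns True by force
  next
    case False
    have "ns' \<in> dec_tuples d n" using len so gt ns by (auto simp: dec_tuples_def)
    hence IH: "ns' \<in> TT d n (hd ns')" using Suc.IH False by simp
    have "ns' \<noteq> []" using len ns False by auto
    hence "hd ns' < m" using so ns by (cases ns') auto
    thus ?thesis using IH ns by auto
  qed
qed

lemma dec_eq: assumes "d \<ge> 1" shows "dec_tuples d n = (\<Union>m. TT d n m)"
proof
  show "dec_tuples d n \<subseteq> (\<Union>m. TT d n m)" using dec_TT assms by blast
  show "(\<Union>m. TT d n m) \<subseteq> dec_tuples d n"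
    using TT_inv unfolding dec_tuples_def by blast
qed

definition wt :: "(lkind \<times> nat) list \<Rightarrow> nat list \<Rightarrow> real" where
  "wt zs ns = (\<Prod>i<length zs. l_val (fst (zs!i)) (ns!i) ^ snd (zs!i))"

lemma wt_Nil: "wt [] ns = 1" by (simp add: wt_def)
lemma wt_Cons: "wt ((k,s)#zs) (m#ns) = l_val k m ^ s * wt zs ns"
  unfolding wt_def length_Cons prod.lessThan_Suc_shift by simp

lemma TT_sum: "(\<Sum>ns\<in>TT (length zs) n m. 1 / wt zs ns) = coefw zs n m"
proof (induction zs arbitrary: m)
  case Nil thus ?case by (simp add: wt_Nil)
next
  case (Cons z zs)
  obtain k s where z: "z = (k, s)" by (cases z)
  have inj: "inj_on (\<lambda>ns. m # ns) (\<Union>j<m. TT (length zs) n j)" by (auto simp: inj_on_def)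
  have "(\<Sum>ns\<in>TT (length (z#zs)) n m. 1 / wt (z#zs) ns)
      = (\<Sum>ns\<in>(\<Union>j<m. TT (length zs) n j). 1 / wt ((k,s)#zs) (m # ns))"
    using z by (simp add: sum.reindex[OF inj])
  also have "\<dots> = (\<Sum>ns\<in>(\<Union>j<m. TT (length zs) n j). (1 / l_val k m ^ s) * (1 / wt zs ns))"
    by (rule sum.cong[OF refl]) (simp add: wt_Cons)
  also have "\<dots> = (\<Sum>j<m. \<Sum>ns\<in>TT (length zs) n j. (1 / l_val k m ^ s) * (1 / wt zs ns))"
    by (rule sum.UNION_disjoint) (auto simp: TT_finite dest: TT_disj)
  also have "\<dots> = (\<Sum>j<m. (1 / l_val k m ^ s) * (\<Sum>ns\<in>TT (length zs) n j. 1 / wt zs ns))"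
    by (simp only: sum_distrib_left)
  also have "\<dots> = (\<Sum>j<m. (1 / l_val k m ^ s) * coefw zs n j)"
    by (simp only: Cons.IH)
  also have "\<dots> = (1 / l_val k m ^ s) * (\<Sum>j<m. coefw zs n j)"
    by (simp only: sum_distrib_left)
  also have "\<dots> = coefw (z#zs) n m" by (simp add: z outc_def psum_def)
  finally show ?case .
qed

lemma l_val_ge1: "m \<ge> 1 \<Longrightarrow> l_val k m \<ge> 1"
  by (cases k) (auto simp: l_val_def)

lemma coefw_nonneg: "coefw zs n m \<ge> 0"
proof (induction zs arbitrary: m)
  case Nil thus ?case by simp
next
  case (Cons z zs)
  obtain k s where z: "z = (k, s)" by (cases z)
  show ?case
  proof (cases "m = 0")
    case True thus ?thesis by (simp add: z outc_def psum_def)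
  next
    case False
    hence "l_val k m ^ s > 0" using l_val_ge1[of m k] by simp
    moreover have "psum (coefw zs n) m \<ge> 0" unfolding psum_def using Cons.IH by (simp add: sum_nonneg)
    ultimately show ?thesis by (simp add: z outc_def)
  qed
qed

lemma wt_nonneg: assumes "ns \<in> dec_tuples (length zs) n" shows "wt zs ns \<ge> 0"
  unfolding wt_def
proof (rule prod_nonneg)
  fix i assume i: "i \<in> {..<length zs}"
  have "ns ! i \<in> set ns" using assms i by (auto simp: dec_tuples_def)
  hence "ns ! i \<ge> 1" using assms by (auto simp: dec_tuples_def)
  hence "l_val (fst (zs ! i)) (ns ! i) \<ge> 1" by (rule l_val_ge1)
  thus "0 \<le> l_val (fst (zs ! i)) (ns ! i) ^ snd (zs ! i)" by (intro zero_le_power) simp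
qed

lemma a_coef_nonneg: "a_coef m x \<ge> 0"
proof -
  have "(x^2)^m \<ge> 0" by simp
  thus ?thesis unfolding a_coef_eq using bc_pos[of m] by simp
qed

lemma hassum:
  assumes zs: "zs \<noteq> []" and x: "\<bar>x\<bar> < 1"
  shows "((\<lambda>ns. a_coef (hd ns) x / wt zs ns) has_sum ser (coefw zs n) x) (dec_tuples (length zs) n)"
proof -
  define d where "d = length zs"
  have d1: "d \<ge> 1" using zs by (simp add: d_def Suc_leI)
  define f where "f = (\<lambda>ns. a_coef (hd ns) x / wt zs ns)"
  define g where "g = (\<lambda>m. a_coef m x * coefw zs n m)"
  have fT: "(f has_sum g m) (TT d n m)" for m
  proof -
    have "(f has_sum (\<Sum>ns\<in>TT d n m. f ns)) (TT d n m)" by (simp add: TT_finite)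
    moreover have "(\<Sum>ns\<in>TT d n m. f ns) = g m"
    proof -
      have "(\<Sum>ns\<in>TT d n m. f ns) = (\<Sum>ns\<in>TT d n m. a_coef m x * (1 / wt zs ns))"
      proof (rule sum.cong[OF refl])
        fix ns assume "ns \<in> TT d n m"
        hence "hd ns = m" using TT_inv[of ns d n m] d1 by auto
        thus "f ns = a_coef m x * (1 / wt zs ns)" by (simp add: f_def)
      qed
      also have "\<dots> = a_coef m x * (\<Sum>ns\<in>TT d n m. 1 / wt zs ns)" by (rule sum_distrib_left[symmetric])
      also have "\<dots> = g m" unfolding g_def d_def TT_sum ..
      finally show ?thesis .
    qed
    ultimately show ?thesis by simp
  qed
  have fnn: "f ns \<ge> 0" if "ns \<in> dec_tuples d n" for ns
    using wt_nonneg[of ns zs n] that a_coef_nonneg by (simp add: f_def d_def)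
  have gs: "(g has_sum ser (coefw zs n) x) UNIV"
  proof (rule sums_nonneg_imp_has_sum)
    show "g sums ser (coefw zs n) x"
      using ser_sums[OF R_coefw x, of zs n] by (simp add: g_def a_coef_eq mult_ac)
    show "g m \<ge> 0" for m by (simp add: g_def a_coef_nonneg coefw_nonneg)
  qed
  have disj: "disjoint_family_on (TT d n) UNIV"
    unfolding disjoint_family_on_def using TT_disj by blast
  have U: "dec_tuples d n = (\<Union>m\<in>UNIV. TT d n m)" using dec_eq[OF d1] by simp
  have sf: "f summable_on (\<Union>m\<in>UNIV. TT d n m)"
  proof (rule summable_on_UnionI[OF fT])
    show "g summable_on UNIV" using gs by (rule has_sum_imp_summable)
    show "f y \<ge> 0" if "y \<in> TT d n m" for m y
    proof -
      have "y \<in> dec_tuples d n" using that U by blast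
      thus ?thesis by (rule fnn)
    qed
  qed (rule disj)
  have sS: "snd ` Sigma UNIV (TT d n) = (\<Union>m\<in>UNIV. TT d n m)"
  proof
    show "snd ` Sigma UNIV (TT d n) \<subseteq> (\<Union>m\<in>UNIV. TT d n m)" by auto
    show "(\<Union>m\<in>UNIV. TT d n m) \<subseteq> snd ` Sigma UNIV (TT d n)"
    proof
      fix y assume "y \<in> (\<Union>m\<in>UNIV. TT d n m)"
      then obtain m where "y \<in> TT d n m" by blast
      hence "(m, y) \<in> Sigma UNIV (TT d n)" by simp
      thus "y \<in> snd ` Sigma UNIV (TT d n)" by (rule image_eqI[rotated]) simp
    qed
  qed
  have h1: "(f has_sum infsum f (\<Union>m\<in>UNIV. TT d n m)) (snd ` Sigma UNIV (TT d n))"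
    unfolding sS using sf by simp
  have inj: "inj_on snd (Sigma UNIV (TT d n))"
  proof (rule inj_onI)
    fix p q assume p: "p \<in> Sigma UNIV (TT d n)" and q: "q \<in> Sigma UNIV (TT d n)" and e: "snd p = snd q"
    have pq: "snd p \<in> TT d n (fst p)" "snd q \<in> TT d n (fst q)" using p q by auto
    have "fst p = fst q"
    proof (rule ccontr)
      assume "fst p \<noteq> fst q"
      hence "TT d n (fst p) \<inter> TT d n (fst q) = {}" by (rule TT_disj)
      thus False using pq e by auto
    qed
    thus "p = q" using e by (simp add: prod_eq_iff)
  qed
  have "((f \<circ> snd) has_sum infsum f (\<Union>m\<in>UNIV. TT d n m)) (Sigma UNIV (TT d n))"
    using iffD1[OF has_sum_reindex[OF inj] h1] .
  hence "(g has_sum infsum f (\<Union>m\<in>UNIV. TT d n m)) UNIV"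
  proof (rule has_sum_SigmaD)
    fix m :: nat assume "m \<in> UNIV"
    show "((\<lambda>y. (f \<circ> snd) (m, y)) has_sum g m) (TT d n m)" using fT[of m] by (simp add: o_def)
  qed
  hence "infsum f (\<Union>m\<in>UNIV. TT d n m) = ser (coefw zs n) x" using gs has_sum_unique by blast
  hence "(f has_sum ser (coefw zs n) x) (\<Union>m\<in>UNIV. TT d n m)" using sf by (metis has_sum_infsum)
  thus ?thesis unfolding f_def d_def[symmetric] U .
qed


theorem theorem5p1:
  fixes d :: nat and ks :: "lkind list" and ss :: "nat list" and y :: real
  assumes "d \<ge> 1" and "length ks = d" and "length ss = d"
    and "\<forall>s\<in>set ss. s \<ge> 1"
    and "\<forall>i\<in>{1..<d}. ks ! i \<in> {L_even, L_odd}"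
    and "- (pi / 2) < y" and "y < pi / 2"
  shows "(\<forall>n::nat. (summand ks ss (sin y) has_sum
            word_val lam ks ss (\<lambda>t. a_coef n (sin t)) y) (dec_tuples d n)) \<and>
         (\<forall>n::nat. \<forall>x::real. -1 < x \<longrightarrow> x < 1 \<longrightarrow>
            (summand ks ss x has_sum word_val Lam ks ss (\<lambda>t. a_coef n t) x) (dec_tuples d n))"
proof -
  have lz: "length (zip ks ss) = d" using assms(2,3) by simp
  have zs: "zip ks ss \<noteq> []" using lz assms(1) by auto
  have sum_eq: "summand ks ss x = (\<lambda>ns. a_coef (hd ns) x / wt (zip ks ss) ns)" for x
  proof
    fix ns
    have "(\<Prod>i<length ks. l_val (ks ! i) (ns ! i) ^ (ss ! i)) = wt (zip ks ss) ns"
      unfolding wt_def using assms(2,3) by (intro prod.cong) auto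
    thus "summand ks ss x ns = a_coef (hd ns) x / wt (zip ks ss) ns" by (simp add: summand_def)
  qed
  have yI: "y \<in> Iv" using assms(6,7) by (simp add: Iv_def)
  have P1: "\<forall>n::nat. (summand ks ss (sin y) has_sum
            word_val lam ks ss (\<lambda>t. a_coef n (sin t)) y) (dec_tuples d n)"
  proof
    fix n
    show "(summand ks ss (sin y) has_sum word_val lam ks ss (\<lambda>t. a_coef n (sin t)) y) (dec_tuples d n)"
      using hassum[OF zs Iv_sin[OF yI], of n] word_lam[OF assms(4) yI, of ks n] lz sum_eq by simp
  qed
  have P2: "\<forall>n::nat. \<forall>x::real. -1 < x \<longrightarrow> x < 1 \<longrightarrow>
            (summand ks ss x has_sum word_val Lam ks ss (\<lambda>t. a_coef n t) x) (dec_tuples d n)"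
  proof (intro allI impI)
    fix n :: nat and x :: real assume x: "-1 < x" "x < 1"
    have xa: "\<bar>x\<bar> < 1" using x by auto
    show "(summand ks ss x has_sum word_val Lam ks ss (\<lambda>t. a_coef n t) x) (dec_tuples d n)"
      using hassum[OF zs xa, of n] word_Lam[OF assms(4) x, of ks n] lz sum_eq by simp
  qed
  show ?thesis using P1 P2 by blast
qed

end
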